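(* Let $\lambda_1,\dots,\lambda_r$ be dominant integral weights of $\mathfrak{g}$ and let $b_1,\dots,b_r\in(F^\times)^N$ satisfy $m(b_i)\ne m(b_j)$ whenever $i\ne j$. Then $V(\lambda,b)=V_{\lambda_1}(b_1)\otimes\cdots\otimes V_{\lambda_r}(b_r)$ is a finite-dimensional simple $\mathcal{L}$-module.
   Context: $F$ is an algebraically closed field of characteristic zero; $\mathfrak{g}$ is a finite-dimensional simple Lie algebra over $F$ with fixed Cartan subalgebra $\mathfrak{h}$ and base $\Delta$ of simple roots; $\sigma_1,\dots,\sigma_N$ are pairwise commuting automorphisms of $\mathfrak{g}$ of finite orders $m_1,\dots,m_N$; $\xi_i\in F$ is a fixed primitive $m_i$-th root of unity. $G=\mathbb{Z}/m_1\mathbb{Z}\times\cdots\times\mathbb{Z}/m_N\mathbb{Z}$, $\bar k$ is the image of $k\in\mathbb{Z}^N$, $\mathfrak{g}_{\bar k}=\{x\in\mathfrak{g}:\sigma_ix=\xi_i^{k_i}x\ \forall i\}$. $R=F[t_1^{\pm1},\dots,t_N^{\pm1}]$, $t^k=t_1^{k_1}\cdots t_N^{k_N}$. The multiloop algebra is $\mathcal{L}=\bigoplus_{k\in\mathbb{Z}^N}\mathfrak{g}_{\bar k}\otimes Ft^k\subseteq\mathfrak{g}\otimes R$ with pointwise bracket $[x\otimes f,y\otimes g]=[x,y]\otimes fg$. For $b=(b_1,\dots,b_N)\in(F^\times)^N$, $m(b)=(b_1^{m_1},\dots,b_N^{m_N})$. For a dominant integral weight $\lambda$, $V_\lambda$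 is the simple $\mathfrak{g}$-module of highest weight $\lambda$ and $V_\lambda(b)$ is the $\mathcal{L}$-module $V_\lambda$ with action $(x\otimes f).v=f(b)\,x.v$; $V(\lambda,b)$ carries the tensor product $\mathcal{L}$-action. *)

theory Defs
  imports Main "HOL-Computational_Algebra.Polynomial"
begin

definition alg_closed :: "'a::field itself \<Rightarrow> bool" where
  "alg_closed _ \<longleftrightarrow> (\<forall>p::'a poly. degree p \<ge> 1 \<longrightarrow> (\<exists>x. poly p x = 0))"

definition lie_algebra :: "('a::field \<Rightarrow> 'g::ab_group_add \<Rightarrow> 'g) \<Rightarrow> ('g \<Rightarrow> 'g \<Rightarrow> 'g) \<Rightarrow> bool" where
  "lie_algebra scl br \<longleftrightarrow>
     vector_space scl \<and>
     (\<forall>a x y z. br (scl a x + y) z = scl a (br x z) + br y z) \<and>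
     (\<forall>x. br x x = 0) \<and>
     (\<forall>x y z. br x (br y z) + br y (br z x) + br z (br x y) = 0)"

definition fin_dim :: "('a::field \<Rightarrow> 'g::ab_group_add \<Rightarrow> 'g) \<Rightarrow> bool" where
  "fin_dim scl \<longleftrightarrow> (\<exists>B. finite B \<and> module.span scl B = UNIV)"

definition lie_ideal :: "('a::field \<Rightarrow> 'g::ab_group_add \<Rightarrow> 'g) \<Rightarrow> ('g \<Rightarrow> 'g \<Rightarrow> 'g) \<Rightarrow> 'g set \<Rightarrow> bool" where
  "lie_ideal scl br I \<longleftrightarrow> module.subspace scl I \<and> (\<forall>x\<in>I. \<forall>y. br y x \<in> I)"

definition simple_lie_algebra :: "('a::field \<Rightarrow> 'g::ab_group_add \<Rightarrow> 'g) \<Rightarrow> ('g \<Rightarrow> 'g \<Rightarrow> 'g) \<Rightarrow> bool" where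
  "simple_lie_algebra scl br \<longleftrightarrow> lie_algebra scl br \<and> fin_dim scl \<and>
     (\<exists>x y. br x y \<noteq> 0) \<and>
     (\<forall>I. lie_ideal scl br I \<longrightarrow> I = {0} \<or> I = UNIV)"

definition lie_automorphism :: "('a::field \<Rightarrow> 'g::ab_group_add \<Rightarrow> 'g) \<Rightarrow> ('g \<Rightarrow> 'g \<Rightarrow> 'g) \<Rightarrow> ('g \<Rightarrow> 'g) \<Rightarrow> bool" where
  "lie_automorphism scl br \<sigma> \<longleftrightarrow> Vector_Spaces.linear scl scl \<sigma> \<and> bij \<sigma> \<and>
     (\<forall>x y. \<sigma> (br x y) = br (\<sigma> x) (\<sigma> y))"

definition has_order :: "('g \<Rightarrow> 'g) \<Rightarrow> nat \<Rightarrow> bool" where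
  "has_order \<sigma> m \<longleftrightarrow> m \<ge> 1 \<and> (\<sigma> ^^ m) = id \<and> (\<forall>j. 0 < j \<and> j < m \<longrightarrow> (\<sigma> ^^ j) \<noteq> id)"

definition primitive_root :: "'a::field \<Rightarrow> nat \<Rightarrow> bool" where
  "primitive_root \<xi> m \<longleftrightarrow> m \<ge> 1 \<and> \<xi> ^ m = 1 \<and> (\<forall>j. 0 < j \<and> j < m \<longrightarrow> \<xi> ^ j \<noteq> 1)"

definition grade_space ::
  "('a::field \<Rightarrow> 'g::ab_group_add \<Rightarrow> 'g) \<Rightarrow> nat \<Rightarrow> (nat \<Rightarrow> 'g \<Rightarrow> 'g) \<Rightarrow> (nat \<Rightarrow> 'a) \<Rightarrow> (nat \<Rightarrow> int) \<Rightarrow> 'g set" where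
  "grade_space scl N \<sigma> \<xi> k = {x. \<forall>i<N. \<sigma> i x = scl (\<xi> i powi k i) x}"

text \<open>A representation of g on F^d: rho x is a d x d matrix (entries rho x p q, p q < d).
  Vectors of F^d are functions nat => F vanishing outside {..<d}.\<close>

definition vec_space :: "nat \<Rightarrow> (nat \<Rightarrow> 'a::field) set" where
  "vec_space d = {v. \<forall>p. p \<ge> d \<longrightarrow> v p = 0}"

definition F_subspace :: "('i \<Rightarrow> 'a::field) set \<Rightarrow> bool" where
  "F_subspace W \<longleftrightarrow> (\<lambda>_. 0) \<in> W \<and> (\<forall>v\<in>W. \<forall>w\<in>W. (\<lambda>i. v i + w i) \<in> W) \<and>
     (\<forall>c. \<forall>v\<in>W. (\<lambda>i. c * v i) \<in> W)"

definition mat_vec :: "nat \<Rightarrow> (nat \<Rightarrow> nat \<Rightarrow> 'a::field) \<Rightarrow> (nat \<Rightarrow> 'a) \<Rightarrow> (nat \<Rightarrow> 'a)" where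
  "mat_vec d A v = (\<lambda>p. if p < d then (\<Sum>q<d. A p q * v q) else 0)"

definition lie_rep ::
  "('a::field \<Rightarrow> 'g::ab_group_add \<Rightarrow> 'g) \<Rightarrow> ('g \<Rightarrow> 'g \<Rightarrow> 'g) \<Rightarrow> nat \<Rightarrow> ('g \<Rightarrow> nat \<Rightarrow> nat \<Rightarrow> 'a) \<Rightarrow> bool" where
  "lie_rep scl br d \<rho> \<longleftrightarrow>
     (\<forall>a x y p q. p < d \<and> q < d \<longrightarrow> \<rho> (scl a x + y) p q = a * \<rho> x p q + \<rho> y p q) \<and>
     (\<forall>x y p q. p < d \<and> q < d \<longrightarrow>
        \<rho> (br x y) p q = (\<Sum>l<d. \<rho> x p l * \<rho> y l q - \<rho> y p l * \<rho> x l q))"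

definition irreducible_rep ::
  "('a::field \<Rightarrow> 'g::ab_group_add \<Rightarrow> 'g) \<Rightarrow> ('g \<Rightarrow> 'g \<Rightarrow> 'g) \<Rightarrow> nat \<Rightarrow> ('g \<Rightarrow> nat \<Rightarrow> nat \<Rightarrow> 'a) \<Rightarrow> bool" where
  "irreducible_rep scl br d \<rho> \<longleftrightarrow> lie_rep scl br d \<rho> \<and> d \<ge> 1 \<and>
     (\<forall>W. F_subspace W \<and> W \<subseteq> vec_space d \<and> (\<forall>x. \<forall>v\<in>W. mat_vec d (\<rho> x) v \<in> W)
          \<longrightarrow> W = {\<lambda>_. 0} \<or> W = vec_space d)"

text \<open>F^{d_0} (x) ... (x) F^{d_{r-1}} is realised as functions on index tuples
  (lists js with length r and js!i < d i), vanishing elsewhere.\<close>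

definition tidx :: "nat \<Rightarrow> (nat \<Rightarrow> nat) \<Rightarrow> nat list set" where
  "tidx r d = {js. length js = r \<and> (\<forall>i<r. js ! i < d i)}"

definition tensor_space :: "nat \<Rightarrow> (nat \<Rightarrow> nat) \<Rightarrow> (nat list \<Rightarrow> 'a::field) set" where
  "tensor_space r d = {c. \<forall>js. js \<notin> tidx r d \<longrightarrow> c js = 0}"

text \<open>Evaluation of t^k at b_i = (b i 0, ..., b i (N-1)).\<close>
definition eval_mono :: "nat \<Rightarrow> (nat \<Rightarrow> 'a::field) \<Rightarrow> (nat \<Rightarrow> int) \<Rightarrow> 'a" where
  "eval_mono N bi k = (\<Prod>j<N. bi j powi k j)"

text \<open>Action of x (x) t^k on V(lambda,b):
  sum_i (t^k)(b_i) * (1 (x) .. (x) rho_i(x) (x) .. (x) 1).\<close>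
definition tensor_act ::
  "nat \<Rightarrow> nat \<Rightarrow> (nat \<Rightarrow> nat) \<Rightarrow> (nat \<Rightarrow> 'g \<Rightarrow> nat \<Rightarrow> nat \<Rightarrow> 'a::field) \<Rightarrow> (nat \<Rightarrow> nat \<Rightarrow> 'a)
    \<Rightarrow> 'g \<Rightarrow> (nat \<Rightarrow> int) \<Rightarrow> (nat list \<Rightarrow> 'a) \<Rightarrow> (nat list \<Rightarrow> 'a)" where
  "tensor_act N r d \<rho> b x k c = (\<lambda>js. if js \<in> tidx r d then
      (\<Sum>i<r. eval_mono N (b i) k * (\<Sum>l<d i. \<rho> i x (js ! i) l * c (js[i := l])))
    else 0)"

text \<open>L-submodules: subspaces stable under all x (x) t^k with x in g_{bar k}
  (these span the multiloop algebra L).  Simplicity of V(lambda,b) as L-module.\<close>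
definition simple_multiloop_tensor_module ::
  "('a::field \<Rightarrow> 'g::ab_group_add \<Rightarrow> 'g) \<Rightarrow> nat \<Rightarrow> (nat \<Rightarrow> 'g \<Rightarrow> 'g) \<Rightarrow> (nat \<Rightarrow> 'a)
    \<Rightarrow> nat \<Rightarrow> (nat \<Rightarrow> nat) \<Rightarrow> (nat \<Rightarrow> 'g \<Rightarrow> nat \<Rightarrow> nat \<Rightarrow> 'a) \<Rightarrow> (nat \<Rightarrow> nat \<Rightarrow> 'a) \<Rightarrow> bool" where
  "simple_multiloop_tensor_module scl N \<sigma> \<xi> r d \<rho> b \<longleftrightarrow>
     (tensor_space r d :: (nat list \<Rightarrow> 'a) set) \<noteq> {\<lambda>_. 0} \<and>
     (\<forall>W. F_subspace W \<and> W \<subseteq> tensor_space r d \<and>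
          (\<forall>k. \<forall>x\<in>grade_space scl N \<sigma> \<xi> k. \<forall>c\<in>W. tensor_act N r d \<rho> b x k c \<in> W)
        \<longrightarrow> W = {\<lambda>_. 0} \<or> W = tensor_space r d)"

end

theory Submission
  imports Defs "Jordan_Normal_Form.Char_Poly"
begin


lemma addhom_zero: assumes "\<forall>x y. f (x+y) = f x + f (y::'b::ab_group_add)" shows "f 0 = (0::'c::ab_group_add)"
proof -
  have "f (0+0) = f 0 + f 0" using assms by blast
  thus ?thesis by simp
qed

lemma addhom_sum: assumes "\<forall>x y. f (x+y) = f x + f (y::'b::ab_group_add)"
  shows "f (sum g A) = (\<Sum>i\<in>A. f (g i) :: 'c::ab_group_add)"
proof (induction A rule: infinite_finite_induct)
  case (infinite A) then show ?case using addhom_zero[OF assms] by simp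
next
  case empty then show ?case using addhom_zero[OF assms] by simp
next
  case (insert x F) then show ?case using assms by simp
qed

definition projc :: "('a::field \<Rightarrow> 'b::ab_group_add \<Rightarrow> 'b) \<Rightarrow> ('b\<Rightarrow>'b) \<Rightarrow> 'a \<Rightarrow> nat \<Rightarrow> nat \<Rightarrow> 'b \<Rightarrow> 'b" where
  "projc scl \<sigma> \<xi> m t y = (\<Sum>s<m. scl ((inverse \<xi>)^(s*t) / of_nat m) ((\<sigma>^^s) y))"

context fixes scl :: "'a::field \<Rightarrow> 'b::ab_group_add \<Rightarrow> 'b" (infixr \<open>*s\<close> 75)
  assumes vs: "vector_space scl"
begin
interpretation V: vector_space scl by (rule vs)

lemma funpow_hom:
  assumes add: "\<forall>x y. \<sigma> (x+y) = \<sigma> x + \<sigma> y" and sc: "\<forall>c x. \<sigma> (c *s x) = c *s \<sigma> x"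
  shows "\<forall>x y. (\<sigma>^^s) (x+y) = (\<sigma>^^s) x + (\<sigma>^^s) y" "\<forall>c x. (\<sigma>^^s) (c *s x) = c *s (\<sigma>^^s) x"
  by (induction s) (auto simp: add sc)


lemma geom_root:
  assumes prim: "primitive_root (\<xi>::'a) m" and s: "0 < s" "s < m"
  shows "(\<Sum>t<m. (inverse \<xi>)^(s*t)) = 0"
proof -
  have m1: "\<xi>^m = 1" and ne: "\<xi>^s \<noteq> 1" using prim s by (auto simp: primitive_root_def)
  have x0: "\<xi> \<noteq> 0" using m1 prim by (auto simp: primitive_root_def power_0_left)
  let ?q = "(inverse \<xi>)^s"
  have q1: "?q \<noteq> 1" using ne by (simp add: power_inverse)
  have qm: "?q^m = 1" proof -
    have "?q^m = (inverse \<xi>)^(m * s)" by (simp add: power_mult[symmetric] mult.commute)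
    also have "\<dots> = 1" by (simp add: power_mult power_inverse m1)
    finally show ?thesis .
  qed
  have "(\<Sum>t<m. (inverse \<xi>)^(s*t)) = (\<Sum>t<m. ?q^t)" by (simp add: power_mult)
  also have "\<dots> = 0" using q1 qm by (simp add: geometric_sum)
  finally show ?thesis .
qed

lemma proj_sum:
  assumes prim: "primitive_root (\<xi>::'a) m" and c0: "of_nat m \<noteq> (0::'a)"
  shows "(\<Sum>t<m. projc scl \<sigma> \<xi> m t y) = y"
proof -
  have m1: "m \<ge> 1" using prim by (auto simp: primitive_root_def)
  have "(\<Sum>t<m. projc scl \<sigma> \<xi> m t y) = (\<Sum>s<m. (\<Sum>t<m. (inverse \<xi>)^(s*t) / of_nat m) *s (\<sigma>^^s) y)"
    unfolding projc_def V.scale_sum_left by (rule sum.swap)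
  also have "\<dots> = (\<Sum>s\<in>{0}. (\<Sum>t<m. (inverse \<xi>)^(s*t) / of_nat m) *s (\<sigma>^^s) y)"
  proof (rule sum.mono_neutral_right)
    show "\<forall>i\<in>{..<m} - {0}. (\<Sum>t<m. inverse \<xi> ^ (i * t) / of_nat m) *s (\<sigma> ^^ i) y = 0"
    proof
      fix i assume i: "i \<in> {..<m} - {0}"
      have "(\<Sum>t<m. inverse \<xi> ^ (i * t) / of_nat m) = (\<Sum>t<m. inverse \<xi> ^ (i * t)) / of_nat m"
        by (simp add: sum_divide_distrib)
      also have "\<dots> = 0" using geom_root[OF prim, of i] i by simp
      finally show "(\<Sum>t<m. inverse \<xi> ^ (i * t) / of_nat m) *s (\<sigma> ^^ i) y = 0" by simp
    qed
  qed (use m1 in auto)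
  also have "\<dots> = y" using c0 by simp
  finally show ?thesis .
qed

lemma proj_eig:
  assumes add: "\<forall>x y. \<sigma> (x+y) = \<sigma> x + \<sigma> y" and sc: "\<forall>c x. \<sigma> (c *s x) = c *s \<sigma> x"
    and ord: "(\<sigma> ^^ m) = id" and prim: "primitive_root (\<xi>::'a) m"
  shows "\<sigma> (projc scl \<sigma> \<xi> m t y) = \<xi>^t *s projc scl \<sigma> \<xi> m t y"
proof -
  have m1: "\<xi>^m = 1" and mpos: "m \<ge> 1" using prim by (auto simp: primitive_root_def)
  have x0: "\<xi> \<noteq> 0" using m1 mpos by (auto simp: power_0_left)
  obtain m' where m': "m = Suc m'" using mpos by (cases m) auto
  define h where "h s = (\<xi>^t * (inverse \<xi>)^(s*t) / of_nat m) *s (\<sigma>^^s) y" for s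
  define g where "g s = ((inverse \<xi>)^(s*t) / of_nat m) *s (\<sigma>^^(Suc s)) y" for s
  have "\<sigma> (projc scl \<sigma> \<xi> m t y) = (\<Sum>s<m. g s)"
    unfolding projc_def addhom_sum[OF add] g_def using sc by simp
  also have "\<dots> = (\<Sum>s<m'. g s) + g m'" by (simp add: m')
  also have "\<dots> = (\<Sum>s<m'. h (Suc s)) + h 0"
  proof -
    have "g s = h (Suc s)" for s
      unfolding g_def h_def using x0
      by (simp add: power_add mult.assoc power_mult_distrib[symmetric] field_simps)
    moreover have "g m' = h 0"
    proof -
      have "(\<sigma>^^(Suc m')) y = y" using ord m' by simp
      moreover have "(inverse \<xi>)^(m'*t) = \<xi>^t"
      proof -
        have "(inverse \<xi>)^(m'*t) * (inverse \<xi>)^t = 1"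
          by (metis m' m1 power_add mult_Suc power_inverse power_mult inverse_1 power_one add.commute)
        thus ?thesis using x0 by (simp add: field_simps power_inverse)
      qed
      ultimately show ?thesis unfolding g_def h_def by simp
    qed
    ultimately show ?thesis by simp
  qed
  also have "\<dots> = (\<Sum>s<m. h s)" unfolding m' sum.lessThan_Suc_shift by (simp add: add.commute)
  also have "\<dots> = \<xi>^t *s projc scl \<sigma> \<xi> m t y"
    unfolding projc_def h_def V.scale_sum_right by (simp add: field_simps)
  finally show ?thesis .
qed


lemma funpow_comm: assumes "f \<circ> g = g \<circ> f" shows "f ((g^^s) y) = (g^^s) (f y)"
proof (induction s)
  case (Suc s) then show ?case using assms by (simp add: fun_eq_iff)
qed simp

lemma proj_comm:
  assumes add: "\<forall>x y. \<tau> (x+y) = \<tau> x + \<tau> y" and sc: "\<forall>c x. \<tau> (c *s x) = c *s \<tau> x"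
   and comm: "\<tau> \<circ> \<sigma> = \<sigma> \<circ> \<tau>"
  shows "\<tau> (projc scl \<sigma> \<xi> m t y) = projc scl \<sigma> \<xi> m t (\<tau> y)"
  unfolding projc_def addhom_sum[OF add] using sc funpow_comm[OF comm] by simp

lemma proj_scale:
  assumes add: "\<forall>x y. \<sigma> (x+y) = \<sigma> x + \<sigma> y" and sc: "\<forall>c x. \<sigma> (c *s x) = c *s \<sigma> x"
  shows "projc scl \<sigma> \<xi> m t (c *s y) = c *s projc scl \<sigma> \<xi> m t y"
  unfolding projc_def V.scale_sum_right using funpow_hom(2)[OF add sc] by (simp add: mult.commute)

lemma grade_span:
  fixes \<sigma> :: "nat \<Rightarrow> 'b \<Rightarrow> 'b" and \<xi> :: "nat \<Rightarrow> 'a" and m :: "nat \<Rightarrow> nat"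
  assumes add: "\<forall>i<N. \<forall>x y. \<sigma> i (x+y) = \<sigma> i x + \<sigma> i y"
    and sc: "\<forall>i<N. \<forall>c x. \<sigma> i (c *s x) = c *s \<sigma> i x"
    and ord: "\<forall>i<N. (\<sigma> i ^^ m i) = id"
    and prim: "\<forall>i<N. primitive_root (\<xi> i) (m i)"
    and comm: "\<forall>i<N. \<forall>j<N. \<sigma> i \<circ> \<sigma> j = \<sigma> j \<circ> \<sigma> i"
    and c0: "\<forall>i<N. of_nat (m i) \<noteq> (0::'a)"
  shows "V.span (\<Union>k. {x. \<forall>i<N. \<sigma> i x = (\<xi> i powi k i) *s x}) = UNIV"
proof -
  define G where "G n = (\<Union>k. {x. \<forall>i<n. \<sigma> i x = (\<xi> i powi k i) *s x})" for n
  have "n \<le> N \<Longrightarrow> V.span (G n) = UNIV" for n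
  proof (induction n)
    case 0 then show ?case by (simp add: G_def)
  next
    case (Suc n)
    have nN: "n < N" using Suc by simp
    have "G n \<subseteq> V.span (G (Suc n))"
    proof
      fix y assume "y \<in> G n"
      then obtain k where k: "\<forall>i<n. \<sigma> i y = (\<xi> i powi k i) *s y" by (auto simp: G_def)
      have P: "projc scl (\<sigma> n) (\<xi> n) (m n) t y \<in> G (Suc n)" for t
      proof -
        have "\<forall>i<Suc n. \<sigma> i (projc scl (\<sigma> n) (\<xi> n) (m n) t y)
               = (\<xi> i powi (k(n := int t)) i) *s projc scl (\<sigma> n) (\<xi> n) (m n) t y"
        proof (intro allI impI)
          fix i assume i: "i < Suc n"
          show "\<sigma> i (projc scl (\<sigma> n) (\<xi> n) (m n) t y)
               = (\<xi> i powi (k(n := int t)) i) *s projc scl (\<sigma> n) (\<xi> n) (m n) t y"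
          proof (cases "i = n")
            case True
            then show ?thesis using proj_eig[of "\<sigma> n" "m n" "\<xi> n" t y] add sc ord prim nN
              by (simp add: power_int_of_nat)
          next
            case False
            then have il: "i < n" using i by simp
            have "\<sigma> i (projc scl (\<sigma> n) (\<xi> n) (m n) t y) = projc scl (\<sigma> n) (\<xi> n) (m n) t (\<sigma> i y)"
              by (rule proj_comm) (use add sc comm il nN in auto)
            also have "\<dots> = (\<xi> i powi k i) *s projc scl (\<sigma> n) (\<xi> n) (m n) t y"
              using k il proj_scale[of "\<sigma> n"] add sc nN by simp
            finally show ?thesis using False by simp
          qed
        qed
        then show ?thesis unfolding G_def by blast
      qed
      have "y = (\<Sum>t<m n. projc scl (\<sigma> n) (\<xi> n) (m n) t y)"
        using proj_sum[of "\<xi> n" "m n"] prim c0 nN by simp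
      also have "\<dots> \<in> V.span (G (Suc n))"
        by (rule V.span_sum) (use P V.span_base in blast)
      finally show "y \<in> V.span (G (Suc n))" .
    qed
    then have "V.span (G n) \<subseteq> V.span (G (Suc n))"
      using V.span_minimal V.subspace_span by blast
    then show ?case using Suc by auto
  qed
  then show ?thesis unfolding G_def by simp
qed

end



lemma Fsub_add: "F_subspace W \<Longrightarrow> u \<in> W \<Longrightarrow> v \<in> W \<Longrightarrow> (\<lambda>i. u i + v i) \<in> W"
  by (auto simp: F_subspace_def)
lemma Fsub_scale: "F_subspace W \<Longrightarrow> u \<in> W \<Longrightarrow> (\<lambda>i. c * u i) \<in> W"
  by (auto simp: F_subspace_def)
lemma Fsub_zero: "F_subspace W \<Longrightarrow> (\<lambda>_. 0) \<in> W"
  by (auto simp: F_subspace_def)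
lemma Fsub_diff: assumes "F_subspace W" "u \<in> W" "v \<in> W" shows "(\<lambda>i. u i - v i) \<in> W"
proof -
  have "(\<lambda>i. u i + (-1) * v i) \<in> W" using assms Fsub_add Fsub_scale by blast
  thus ?thesis by simp
qed
lemma Fsub_sum: assumes "F_subspace W" "\<forall>a\<in>S. f a \<in> W"
  shows "(\<lambda>i. \<Sum>a\<in>S. f a i) \<in> W"
  using assms(2)
proof (induction S rule: infinite_finite_induct)
  case (infinite A) then show ?case using Fsub_zero[OF assms(1)] by simp
next
  case empty then show ?case using Fsub_zero[OF assms(1)] by simp
next
  case (insert x F) then show ?case using Fsub_add[OF assms(1), of "f x" "\<lambda>i. \<Sum>a\<in>F. f a i"] by simp
qed

lemma prod_shift:
  fixes z :: "nat \<Rightarrow> 'a::field"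
  assumes "j < N" "\<forall>j<N. z j \<noteq> 0"
  shows "(\<Prod>j'<N. z j' powi (l(j := l j + 1)) j') = z j * (\<Prod>j'<N. z j' powi l j')"
proof -
  have f: "finite {..<N}" and jN: "j \<in> {..<N}" using assms by auto
  have "(\<Prod>j'<N. z j' powi (l(j := l j + 1)) j') = z j powi (l j + 1) * (\<Prod>j'\<in>{..<N}-{j}. z j' powi (l(j := l j + 1)) j')"
    using prod.remove[OF f jN, of "\<lambda>j'. z j' powi (l(j := l j + 1)) j'"] by simp
  also have "(\<Prod>j'\<in>{..<N}-{j}. z j' powi (l(j := l j + 1)) j') = (\<Prod>j'\<in>{..<N}-{j}. z j' powi l j')"
    by (rule prod.cong) auto
  also have "z j powi (l j + 1) = z j * z j powi l j" using assms by (simp add: power_int_add_1')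
  also have "z j * z j powi l j * (\<Prod>j'\<in>{..<N}-{j}. z j' powi l j') = z j * (\<Prod>j'<N. z j' powi l j')"
    using prod.remove[OF f jN, of "\<lambda>j'. z j' powi l j'"] by simp
  finally show ?thesis .
qed

lemma sep:
  fixes W :: "('b \<Rightarrow> 'a::field) set" and z :: "nat \<Rightarrow> nat \<Rightarrow> 'a"
  assumes "finite S" and W: "F_subspace W"
  and "\<forall>l::nat\<Rightarrow>int. \<forall>c\<in>W. (\<lambda>js. \<Sum>i\<in>S. (\<Prod>j<N. z i j powi l j) * A i c js) \<in> W"
  and "\<forall>i\<in>S. \<forall>j<N. z i j \<noteq> 0"
  and "\<forall>i\<in>S. \<forall>i'\<in>S. i \<noteq> i' \<longrightarrow> (\<exists>j<N. z i j \<noteq> z i' j)"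
  shows "\<forall>i\<in>S. \<forall>c\<in>W. A i c \<in> W"
  using assms(1,3-5)
proof (induction S arbitrary: A rule: finite_induct)
  case empty then show ?case by simp
next
  case (insert a S)
  define T where "T l c = (\<lambda>js. \<Sum>i\<in>insert a S. (\<Prod>j<N. z i j powi l j) * A i c js)" for l c
  have T: "\<forall>l. \<forall>c\<in>W. T l c \<in> W" using insert.prems(1) unfolding T_def by blast
  have S: "\<forall>i\<in>S. \<forall>c\<in>W. A i c \<in> W"
  proof (intro ballI)
    fix i0 c assume i0: "i0 \<in> S" and c: "c \<in> W"
    have "i0 \<noteq> a" using i0 insert.hyps by auto
    then obtain j where jN: "j < N" and ne: "z i0 j \<noteq> z a j" using insert.prems(3) i0 by blast
    define A' where "A' i c = (\<lambda>js. (z i j - z a j) * A i c js)" for i c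
    have "\<forall>l::nat\<Rightarrow>int. \<forall>c\<in>W. (\<lambda>js. \<Sum>i\<in>S. (\<Prod>j<N. z i j powi l j) * A' i c js) \<in> W"
    proof (intro allI ballI)
      fix l :: "nat \<Rightarrow> int" and c assume c: "c \<in> W"
      have eq: "(\<lambda>js. \<Sum>i\<in>S. (\<Prod>j<N. z i j powi l j) * A' i c js)
          = (\<lambda>js. T (l(j := l j + 1)) c js - z a j * T l c js)"
      proof
        fix js
        have "T (l(j := l j + 1)) c js - z a j * T l c js
           = (\<Sum>i\<in>insert a S. (z i j - z a j) * (\<Prod>j<N. z i j powi l j) * A i c js)"
          unfolding T_def sum_distrib_left sum_subtractf[symmetric]
        proof (rule sum.cong[OF refl])
          fix i assume "i \<in> insert a S"
          then have "(\<Prod>j'<N. z i j' powi (l(j := l j + 1)) j') = z i j * (\<Prod>j<N. z i j powi l j)"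
            using prod_shift[OF jN, of "z i" l] insert.prems(2) by blast
          then show "(\<Prod>j'<N. z i j' powi (l(j := l j + 1)) j') * A i c js - z a j * ((\<Prod>j<N. z i j powi l j) * A i c js)
             = (z i j - z a j) * (\<Prod>j<N. z i j powi l j) * A i c js" by (simp add: algebra_simps)
        qed
        also have "\<dots> = (\<Sum>i\<in>S. (z i j - z a j) * (\<Prod>j<N. z i j powi l j) * A i c js)"
          using insert.hyps by simp
        finally show "(\<Sum>i\<in>S. (\<Prod>j<N. z i j powi l j) * A' i c js) = T (l(j := l j + 1)) c js - z a j * T l c js"
          unfolding A'_def by (simp add: algebra_simps)
      qed
      show "(\<lambda>js. \<Sum>i\<in>S. (\<Prod>j<N. z i j powi l j) * A' i c js) \<in> W"
        unfolding eq using Fsub_diff[OF W] Fsub_scale[OF W] T c by blast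
    qed
    then have "\<forall>i\<in>S. \<forall>c\<in>W. A' i c \<in> W"
      using insert.IH insert.prems by blast
    then have "(\<lambda>js. inverse (z i0 j - z a j) * A' i0 c js) \<in> W" using i0 c Fsub_scale[OF W] by blast
    moreover have "(\<lambda>js. inverse (z i0 j - z a j) * A' i0 c js) = A i0 c"
      unfolding A'_def using ne by (simp add: fun_eq_iff)
    ultimately show "A i0 c \<in> W" by simp
  qed
  have "\<forall>c\<in>W. A a c \<in> W"
  proof
    fix c assume c: "c \<in> W"
    have "(\<lambda>js. T (\<lambda>_. 0) c js - (\<Sum>i\<in>S. A i c js)) \<in> W"
      using Fsub_diff[OF W] T c Fsub_sum[OF W, of S "\<lambda>i. A i c"] S by blast
    moreover have "(\<lambda>js. T (\<lambda>_. 0) c js - (\<Sum>i\<in>S. A i c js)) = A a c"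
      unfolding T_def using insert.hyps by (simp add: fun_eq_iff)
    ultimately show "A a c \<in> W" by simp
  qed
  then show ?case using S by blast
qed




lemma eigen_exists:
  fixes T :: "nat \<Rightarrow> nat \<Rightarrow> 'a::field"
  assumes alg: "alg_closed TYPE('a)" and d: "d \<ge> 1"
  shows "\<exists>lam u. u \<in> vec_space d \<and> u \<noteq> (\<lambda>_. 0) \<and> mat_vec d T u = (\<lambda>p. lam * u p)"
proof -
  define A where "A = mat d d (\<lambda>(i,j). T i j)"
  have A: "A \<in> carrier_mat d d" by (simp add: A_def)
  have "degree (char_poly A) = d" using degree_monic_char_poly[OF A] by simp
  then obtain lam where "poly (char_poly A) lam = 0" using alg d unfolding alg_closed_def by auto
  then have "eigenvalue A lam" using eigenvalue_root_char_poly[OF A] by simp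
  then obtain v where v: "v \<in> carrier_vec d" "v \<noteq> 0\<^sub>v d" "A *\<^sub>v v = lam \<cdot>\<^sub>v v"
    unfolding eigenvalue_def eigenvector_def using A by auto
  define u where "u p = (if p < d then v $ p else 0)" for p
  have "u \<in> vec_space d" by (simp add: u_def vec_space_def)
  moreover have "u \<noteq> (\<lambda>_. 0)"
  proof
    assume "u = (\<lambda>_. 0)"
    then have "v = 0\<^sub>v d" using v(1) by (auto simp: u_def fun_eq_iff vec_eq_iff) metis
    with v(2) show False by simp
  qed
  moreover have "mat_vec d T u = (\<lambda>p. lam * u p)"
  proof
    fix p
    show "mat_vec d T u p = lam * u p"
    proof (cases "p < d")
      case True
      have "(A *\<^sub>v v) $ p = (\<Sum>q<d. T p q * u q)"
        using True A v(1) by (simp add: A_def scalar_prod_def u_def atLeast0LessThan)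
      then show ?thesis using v(3) True v(1) by (simp add: mat_vec_def u_def)
    qed (simp add: mat_vec_def u_def)
  qed
  ultimately show ?thesis by blast
qed


definition mmul :: "nat \<Rightarrow> (nat \<Rightarrow> nat \<Rightarrow> 'a::field) \<Rightarrow> (nat \<Rightarrow> nat \<Rightarrow> 'a) \<Rightarrow> (nat \<Rightarrow> nat \<Rightarrow> 'a)" where
  "mmul d M M' = (\<lambda>p q. \<Sum>l<d. M p l * M' l q)"
definition ev :: "nat \<Rightarrow> nat \<Rightarrow> 'a::field" where
  "ev q = (\<lambda>p. if p = q then 1 else 0)"
definition idm :: "nat \<Rightarrow> nat \<Rightarrow> 'a::field" where
  "idm = (\<lambda>p q. if p = q then 1 else 0)"

lemma mv_mmul: "mat_vec d (mmul d M M') v = mat_vec d M (mat_vec d M' v)"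
proof
  fix p show "mat_vec d (mmul d M M') v p = mat_vec d M (mat_vec d M' v) p"
  proof (cases "p < d")
    case True
    have "(\<Sum>q<d. (\<Sum>l<d. M p l * M' l q) * v q) = (\<Sum>l<d. M p l * (\<Sum>q<d. M' l q * v q))"
      by (simp add: sum_distrib_left sum_distrib_right mult.assoc) (rule sum.swap)
    also have "\<dots> = (\<Sum>l<d. M p l * mat_vec d M' v l)"
      by (rule sum.cong) (auto simp: mat_vec_def)
    finally show ?thesis using True by (simp add: mat_vec_def mmul_def)
  qed (simp add: mat_vec_def)
qed

lemma mv_add_mat: "mat_vec d (\<lambda>p q. M p q + M' p q) v = (\<lambda>p. mat_vec d M v p + mat_vec d M' v p)"
  by (auto simp: mat_vec_def fun_eq_iff distrib_right sum.distrib)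
lemma mv_scale_mat: "mat_vec d (\<lambda>p q. c * M p q) v = (\<lambda>p. c * mat_vec d M v p)"
  by (auto simp: mat_vec_def fun_eq_iff sum_distrib_left mult.assoc)
lemma mv_diff_mat: "mat_vec d (\<lambda>p q. M p q - M' p q) v = (\<lambda>p. mat_vec d M v p - mat_vec d M' v p)"
  by (auto simp: mat_vec_def fun_eq_iff left_diff_distrib sum_subtractf)
lemma mv_sum_mat: "mat_vec d (\<lambda>p q. \<Sum>i\<in>S. B i p q) v = (\<lambda>p. \<Sum>i\<in>S. mat_vec d (B i) v p)"
  by (auto simp: mat_vec_def fun_eq_iff sum_distrib_right intro: sum.swap)
lemma mv_add_vec: "mat_vec d M (\<lambda>i. u i + v i) = (\<lambda>p. mat_vec d M u p + mat_vec d M v p)"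
  by (auto simp: mat_vec_def fun_eq_iff distrib_left sum.distrib)
lemma mv_scale_vec: "mat_vec d M (\<lambda>i. c * u i) = (\<lambda>p. c * mat_vec d M u p)"
  by (auto simp: mat_vec_def fun_eq_iff sum_distrib_left mult.left_commute)
lemma mv_zero_vec: "mat_vec d M (\<lambda>_. 0) = (\<lambda>_. 0)"
  by (auto simp: mat_vec_def fun_eq_iff)
lemma mv_in: "mat_vec d M v \<in> vec_space d"
  by (auto simp: mat_vec_def vec_space_def)
lemma mv_id: "v \<in> vec_space d \<Longrightarrow> mat_vec d idm v = v"
proof
  fix p assume v: "v \<in> vec_space d"
  show "mat_vec d idm v p = v p"
  proof (cases "p < d")
    case True
    have "(\<Sum>q<d. (if p = q then 1 else 0) * v q) = v p" using True
      by (simp add: if_distrib[of "\<lambda>x. x * _"] sum.delta cong: if_cong)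
    then show ?thesis using True by (simp add: mat_vec_def idm_def)
  qed (use v in \<open>simp add: mat_vec_def vec_space_def\<close>)
qed
lemma mv_ev: "q < d \<Longrightarrow> mat_vec d M (ev q) = (\<lambda>p. if p < d then M p q else 0)"
  by (auto simp: mat_vec_def ev_def fun_eq_iff if_distrib[of "\<lambda>x. _ * x"] sum.delta' cong: if_cong)
lemma ev_in: "q < d \<Longrightarrow> ev q \<in> vec_space d"
  by (simp add: ev_def vec_space_def)

lemma vec_decomp: "x \<in> vec_space d \<Longrightarrow> x = (\<lambda>p. \<Sum>q<d. x q * ev q p)"
  by (auto simp: vec_space_def ev_def fun_eq_iff if_distrib[of "\<lambda>y. _ * y"] sum.delta' cong: if_cong)

lemma Fsub_vec: "F_subspace (vec_space d)"
  by (simp add: F_subspace_def vec_space_def)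

lemma lin_mat:
  fixes f :: "(nat \<Rightarrow> 'a::field) \<Rightarrow> (nat \<Rightarrow> 'a)"
  assumes add: "\<forall>x\<in>vec_space d. \<forall>y\<in>vec_space d. f (\<lambda>i. x i + y i) = (\<lambda>i. f x i + f y i)"
    and sc: "\<forall>c. \<forall>x\<in>vec_space d. f (\<lambda>i. c * x i) = (\<lambda>i. c * f x i)"
    and into: "\<forall>x\<in>vec_space d. f x \<in> vec_space d"
  shows "\<forall>x\<in>vec_space d. f x = mat_vec d (\<lambda>p q. f (ev q) p) x"
proof
  fix x :: "nat \<Rightarrow> 'a" assume x: "x \<in> vec_space d"
  have gen: "S \<subseteq> {..<d} \<Longrightarrow> f (\<lambda>p. \<Sum>q\<in>S. x q * ev q p) = (\<lambda>p. \<Sum>q\<in>S. x q * f (ev q) p)" for S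
  proof (induction S rule: infinite_finite_induct)
    case (infinite A) then show ?case using finite_subset by blast
  next
    case empty
    have "(\<lambda>_. 0::'a) \<in> vec_space d" by (simp add: vec_space_def)
    then have "f (\<lambda>i. 0 * (\<lambda>_. 0::'a) i) = (\<lambda>i. 0 * f (\<lambda>_. 0) i)" using sc[rule_format, of "\<lambda>_. 0" 0] by blast
    then show ?case by simp
  next
    case (insert q F)
    have q: "q < d" and FF: "F \<subseteq> {..<d}" using insert by auto
    have in1: "(\<lambda>p. x q * ev q p) \<in> vec_space d" using q by (simp add: vec_space_def ev_def)
    have in2: "(\<lambda>p. \<Sum>q\<in>F. x q * ev q p) \<in> vec_space d"
      using FF by (auto simp: vec_space_def ev_def intro!: sum.neutral)
    have "f (\<lambda>p. \<Sum>q\<in>insert q F. x q * ev q p) = f (\<lambda>i. (\<lambda>p. x q * ev q p) i + (\<lambda>p. \<Sum>q\<in>F. x q * ev q p) i)"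
      using insert by simp
    also have "\<dots> = (\<lambda>i. f (\<lambda>p. x q * ev q p) i + f (\<lambda>p. \<Sum>q\<in>F. x q * ev q p) i)"
      using add[rule_format, OF in1 in2] by simp
    also have "f (\<lambda>p. x q * ev q p) = (\<lambda>i. x q * f (ev q) i)" using sc[rule_format, OF ev_in[OF q]] by simp
    finally show ?case using insert FF by simp
  qed
  have "f x = f (\<lambda>p. \<Sum>q<d. x q * ev q p)" using vec_decomp[OF x] by simp
  also have "\<dots> = (\<lambda>p. \<Sum>q<d. x q * f (ev q) p)" using gen by simp
  also have "\<dots> = mat_vec d (\<lambda>p q. f (ev q) p) x"
  proof
    fix p show "(\<Sum>q<d. x q * f (ev q) p) = mat_vec d (\<lambda>p q. f (ev q) p) x p"
    proof (cases "p < d")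
      case False
      have "\<forall>q<d. f (ev q) p = 0"
      proof (intro allI impI)
        fix q assume "q < d"
        then have "f (ev q) \<in> vec_space d" using into ev_in by blast
        then show "f (ev q) p = 0" using False by (simp add: vec_space_def)
      qed
      then show ?thesis using False by (simp add: mat_vec_def)
    qed (simp add: mat_vec_def mult.commute)
  qed
  finally show "f x = mat_vec d (\<lambda>p q. f (ev q) p) x" .
qed


context
  fixes d :: nat and A :: "(nat \<Rightarrow> nat \<Rightarrow> 'a::field) set"
  assumes alg: "alg_closed TYPE('a)" and d1: "d \<ge> 1"
   and cadd: "\<forall>M\<in>A. \<forall>M'\<in>A. (\<lambda>p q. M p q + M' p q) \<in> A"
   and cscale: "\<forall>M\<in>A. \<forall>c. (\<lambda>p q. c * M p q) \<in> A"
   and cmul: "\<forall>M\<in>A. \<forall>M'\<in>A. mmul d M M' \<in> A"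
   and cid: "idm \<in> A"
   and irr: "\<forall>U. F_subspace U \<and> U \<subseteq> vec_space d \<and> (\<forall>M\<in>A. \<forall>v\<in>U. mat_vec d M v \<in> U)
               \<longrightarrow> U = {\<lambda>_. 0} \<or> U = vec_space d"
begin

lemma A_diff: "M \<in> A \<Longrightarrow> M' \<in> A \<Longrightarrow> (\<lambda>p q. M p q - M' p q) \<in> A"
proof -
  assume M: "M \<in> A" and M': "M' \<in> A"
  have S: "(\<lambda>p q. (-1) * M' p q) \<in> A" using cscale M' by blast
  have "(\<lambda>p q. M p q + (-1) * M' p q) \<in> A" using cadd[rule_format, OF M S] by simp
  then show ?thesis by simp
qed

lemma A_zero: "(\<lambda>p q. 0) \<in> A"
proof -
  have "(\<lambda>p q. 0 * idm p q) \<in> A" using cscale cid by blast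
  then show ?thesis by simp
qed

lemma A_sum: "\<forall>i\<in>S. B i \<in> A \<Longrightarrow> (\<lambda>p q. \<Sum>i\<in>S. B i p q) \<in> A"
proof (induction S rule: infinite_finite_induct)
  case (infinite A) then show ?case using A_zero by simp
next
  case empty then show ?case using A_zero by simp
next
  case (insert x F)
  then have "(\<lambda>p q. B x p q + (\<lambda>p q. \<Sum>i\<in>F. B i p q) p q) \<in> A"
    using cadd[rule_format, of "B x" "\<lambda>p q. \<Sum>i\<in>F. B i p q"] by simp
  then show ?case using insert by simp
qed

lemma schur:
  fixes f :: "(nat \<Rightarrow> 'a) \<Rightarrow> (nat \<Rightarrow> 'a)"
  assumes add: "\<forall>x\<in>vec_space d. \<forall>y\<in>vec_space d. f (\<lambda>i. x i + y i) = (\<lambda>i. f x i + f y i)"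
    and sc: "\<forall>c. \<forall>x\<in>vec_space d. f (\<lambda>i. c * x i) = (\<lambda>i. c * f x i)"
    and into: "\<forall>x\<in>vec_space d. f x \<in> vec_space d"
    and comm: "\<forall>M\<in>A. \<forall>x\<in>vec_space d. f (mat_vec d M x) = mat_vec d M (f x)"
  shows "\<exists>lam. \<forall>x\<in>vec_space d. f x = (\<lambda>p. lam * x p)"
proof -
  define T where "T = (\<lambda>p q. f (ev q) p)"
  have fT: "\<forall>x\<in>vec_space d. f x = mat_vec d T x" using lin_mat[OF add sc into] by (simp add: T_def)
  obtain lam u where u: "u \<in> vec_space d" "u \<noteq> (\<lambda>_. 0)" "mat_vec d T u = (\<lambda>p. lam * u p)"
    using eigen_exists[OF alg d1] by blast
  define U where "U = {x \<in> vec_space d. f x = (\<lambda>p. lam * x p)}"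
  have z: "(\<lambda>_. 0::'a) \<in> vec_space d" by (simp add: vec_space_def)
  have "F_subspace U"
  proof -
    have "f (\<lambda>i. 0 * (\<lambda>_. 0::'a) i) = (\<lambda>i. 0 * f (\<lambda>_. 0) i)" using sc[rule_format, OF z, of 0] by simp
    then have "(\<lambda>_. 0) \<in> U" using z by (simp add: U_def)
    moreover have "\<forall>v\<in>U. \<forall>w\<in>U. (\<lambda>i. v i + w i) \<in> U"
      using add Fsub_vec[of d] by (auto simp: U_def F_subspace_def distrib_left)
    moreover have "\<forall>c. \<forall>v\<in>U. (\<lambda>i. c * v i) \<in> U"
      using sc Fsub_vec[of d] by (auto simp: U_def F_subspace_def mult.left_commute)
    ultimately show ?thesis by (simp add: F_subspace_def)
  qed
  moreover have "U \<subseteq> vec_space d" by (auto simp: U_def)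
  moreover have "\<forall>M\<in>A. \<forall>v\<in>U. mat_vec d M v \<in> U"
    using comm by (auto simp: U_def mv_in mv_scale_vec)
  ultimately have "U = {\<lambda>_. 0} \<or> U = vec_space d" using irr by blast
  moreover have "u \<in> U" using u fT by (simp add: U_def)
  ultimately have "U = vec_space d" using u(2) by auto
  then show ?thesis unfolding U_def by blast
qed

lemma density: "n \<le> d \<Longrightarrow> \<forall>w. (\<forall>i<n. w i \<in> vec_space d) \<longrightarrow> (\<exists>M\<in>A. \<forall>i<n. mat_vec d M (ev i) = w i)"
proof (induction n)
  case 0 then show ?case using cid by blast
next
  case (Suc n)
  have nd: "n < d" using Suc by simp
  have IH: "\<forall>w. (\<forall>i<n. w i \<in> vec_space d) \<longrightarrow> (\<exists>M\<in>A. \<forall>i<n. mat_vec d M (ev i) = w i)"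
    using Suc by simp
  have z: "(\<lambda>_. 0::'a) \<in> vec_space d" by (simp add: vec_space_def)
  have K: "\<exists>M\<in>A. (\<forall>i<n. mat_vec d M (ev i) = (\<lambda>_. 0)) \<and> mat_vec d M (ev n) \<noteq> (\<lambda>_. 0)"
  proof (rule ccontr)
    assume "\<not> ?thesis"
    then have H: "\<forall>M\<in>A. (\<forall>i<n. mat_vec d M (ev i) = (\<lambda>_. 0)) \<longrightarrow> mat_vec d M (ev n) = (\<lambda>_. 0)" by blast
    define spec where "spec i x M \<longleftrightarrow> M \<in> A \<and> (\<forall>j<n. mat_vec d M (ev j) = (if j = i then x else (\<lambda>_. 0)))"
      for i x M
    have ex: "\<exists>M. spec i x M" if "x \<in> vec_space d" for i x
    proof -
      have "\<forall>j<n. (\<lambda>j. if j = i then x else (\<lambda>_. 0)) j \<in> vec_space d" using that z by auto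
      then show ?thesis using IH[rule_format, of "\<lambda>j. if j = i then x else (\<lambda>_. 0)"] unfolding spec_def by auto
    qed
    have uniq: "mat_vec d M (ev n) = mat_vec d M' (ev n)" if "spec i x M" "spec i x M'" for i x M M'
    proof -
      have D: "(\<lambda>p q. M p q - M' p q) \<in> A" using that A_diff by (simp add: spec_def)
      have "\<forall>j<n. mat_vec d (\<lambda>p q. M p q - M' p q) (ev j) = (\<lambda>_. 0)"
        using that by (simp add: spec_def mv_diff_mat)
      then have "mat_vec d (\<lambda>p q. M p q - M' p q) (ev n) = (\<lambda>_. 0)" using H D by blast
      then show ?thesis by (simp add: mv_diff_mat fun_eq_iff)
    qed
    define f where "f i x = mat_vec d (SOME M. spec i x M) (ev n)" for i x
    have fspec: "f i x = mat_vec d M (ev n)" if "x \<in> vec_space d" "spec i x M" for i x M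
      unfolding f_def by (rule uniq[OF someI_ex[OF ex[OF that(1)]] that(2)])
    have lam: "\<exists>lam. \<forall>x\<in>vec_space d. f i x = (\<lambda>p. lam * x p)" if i: "i < n" for i
    proof (rule schur)
      show "\<forall>x\<in>vec_space d. \<forall>y\<in>vec_space d. f i (\<lambda>j. x j + y j) = (\<lambda>j. f i x j + f i y j)"
      proof (intro ballI)
        fix x y :: "nat \<Rightarrow> 'a" assume x: "x \<in> vec_space d" and y: "y \<in> vec_space d"
        obtain Mx My where Mx: "spec i x Mx" and My: "spec i y My" using ex x y by blast
        have "spec i (\<lambda>j. x j + y j) (\<lambda>p q. Mx p q + My p q)"
          using Mx My cadd by (auto simp: spec_def mv_add_mat)
        moreover have "(\<lambda>j. x j + y j) \<in> vec_space d" using Fsub_add[OF Fsub_vec x y] .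
        ultimately show "f i (\<lambda>j. x j + y j) = (\<lambda>j. f i x j + f i y j)"
          using fspec Mx My x y by (simp add: mv_add_mat)
      qed
      show "\<forall>c. \<forall>x\<in>vec_space d. f i (\<lambda>j. c * x j) = (\<lambda>j. c * f i x j)"
      proof (intro allI ballI)
        fix c and x :: "nat \<Rightarrow> 'a" assume x: "x \<in> vec_space d"
        obtain Mx where Mx: "spec i x Mx" using ex x by blast
        have "spec i (\<lambda>j. c * x j) (\<lambda>p q. c * Mx p q)"
          using Mx cscale by (auto simp: spec_def mv_scale_mat)
        moreover have "(\<lambda>j. c * x j) \<in> vec_space d" using Fsub_scale[OF Fsub_vec x] .
        ultimately show "f i (\<lambda>j. c * x j) = (\<lambda>j. c * f i x j)"
          using fspec Mx x by (simp add: mv_scale_mat)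
      qed
      show "\<forall>x\<in>vec_space d. f i x \<in> vec_space d" by (simp add: f_def mv_in)
      show "\<forall>M\<in>A. \<forall>x\<in>vec_space d. f i (mat_vec d M x) = mat_vec d M (f i x)"
      proof (intro ballI)
        fix M and x :: "nat \<Rightarrow> 'a" assume M: "M \<in> A" and x: "x \<in> vec_space d"
        obtain Mx where Mx: "spec i x Mx" using ex x by blast
        have "spec i (mat_vec d M x) (mmul d M Mx)"
          using Mx M cmul by (auto simp: spec_def mv_mmul mv_zero_vec)
        then have "f i (mat_vec d M x) = mat_vec d (mmul d M Mx) (ev n)" using fspec mv_in by blast
        also have "\<dots> = mat_vec d M (f i x)" using fspec[OF x Mx] by (simp add: mv_mmul)
        finally show "f i (mat_vec d M x) = mat_vec d M (f i x)" .
      qed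
    qed
    then obtain lm where lm: "\<forall>i<n. \<forall>x\<in>vec_space d. f i x = (\<lambda>p. lm i * x p)" by metis
    define Mi where "Mi i = (SOME M. spec i (ev i) M)" for i
    have Mi: "spec i (ev i) (Mi i)" if "i < n" for i
      unfolding Mi_def by (rule someI_ex[OF ex]) (use that nd in \<open>simp add: ev_in\<close>)
    define M0 where "M0 = (\<lambda>p q. idm p q - (\<Sum>i<n. Mi i p q))"
    have M0A: "M0 \<in> A" unfolding M0_def
      by (rule A_diff[OF cid A_sum]) (use Mi in \<open>auto simp: spec_def\<close>)
    have "\<forall>j<n. mat_vec d M0 (ev j) = (\<lambda>_. 0)"
    proof (intro allI impI)
      fix j assume j: "j < n"
      have "mat_vec d M0 (ev j) = (\<lambda>p. ev j p - (\<Sum>i<n. mat_vec d (Mi i) (ev j) p))"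
      proof -
        have I: "mat_vec d idm (ev j) = ev j" by (rule mv_id) (use j nd in \<open>simp add: ev_in\<close>)
        show ?thesis unfolding M0_def mv_diff_mat mv_sum_mat I by (rule refl)
      qed
      also have "\<dots> = (\<lambda>p. ev j p - (\<Sum>i<n. (if j = i then ev i else (\<lambda>_. 0)) p))"
        using Mi j by (auto simp: spec_def intro!: sum.cong)
      also have "\<dots> = (\<lambda>_. 0)"
      proof
        fix p
        have "(\<Sum>i<n. (if j = i then ev i else (\<lambda>_. 0)) p) = (\<Sum>i<n. if j = i then ev i p else 0)"
          by (rule sum.cong) auto
        also have "\<dots> = ev j p" using j by (simp add: sum.delta)
        finally show "ev j p - (\<Sum>i<n. (if j = i then ev i else (\<lambda>_. 0)) p) = 0" by (metis diff_self)
      qed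
      finally show "mat_vec d M0 (ev j) = (\<lambda>_. 0)" .
    qed
    then have "mat_vec d M0 (ev n) = (\<lambda>_. 0)" using H M0A by blast
    then have "mat_vec d M0 (ev n) n = 0" by simp
    moreover have "mat_vec d M0 (ev n) n = 1"
    proof -
      have "mat_vec d M0 (ev n) = (\<lambda>p. ev n p - (\<Sum>i<n. mat_vec d (Mi i) (ev n) p))"
      proof -
        have I: "mat_vec d idm (ev n) = ev n" by (rule mv_id) (use nd in \<open>simp add: ev_in\<close>)
        show ?thesis unfolding M0_def mv_diff_mat mv_sum_mat I by (rule refl)
      qed
      moreover have "mat_vec d (Mi i) (ev n) = (\<lambda>p. lm i * ev i p)" if "i < n" for i
      proof -
        have "mat_vec d (Mi i) (ev n) = f i (ev i)" using fspec[OF ev_in Mi[OF that]] that nd by simp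
        moreover have "ev i \<in> vec_space d" using that nd by (simp add: ev_in)
        ultimately show ?thesis using lm[rule_format, of i "ev i"] that by simp
      qed
      ultimately show ?thesis by (simp add: ev_def)
    qed
    ultimately show False by simp
  qed
  then obtain M1 where M1: "M1 \<in> A" "\<forall>i<n. mat_vec d M1 (ev i) = (\<lambda>_. 0)" "mat_vec d M1 (ev n) \<noteq> (\<lambda>_. 0)"
    by blast
  define U where "U = {v. \<exists>M\<in>A. (\<forall>i<n. mat_vec d M (ev i) = (\<lambda>_. 0)) \<and> v = mat_vec d M (ev n)}"
  have "F_subspace U"
  proof -
    have "(\<lambda>_. 0) \<in> U" unfolding U_def using A_zero by (auto intro!: bexI[of _ "\<lambda>p q. 0"] simp: mat_vec_def fun_eq_iff)
    moreover have "\<forall>v\<in>U. \<forall>w\<in>U. (\<lambda>i. v i + w i) \<in> U"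
    proof (intro ballI)
      fix v w :: "nat \<Rightarrow> 'a" assume "v \<in> U" "w \<in> U"
      then obtain Mv Mw where "Mv \<in> A" "\<forall>i<n. mat_vec d Mv (ev i) = (\<lambda>_. 0)" "v = mat_vec d Mv (ev n)"
        "Mw \<in> A" "\<forall>i<n. mat_vec d Mw (ev i) = (\<lambda>_. 0)" "w = mat_vec d Mw (ev n)" unfolding U_def by blast
      then show "(\<lambda>i. v i + w i) \<in> U" unfolding U_def using cadd
        by (intro CollectI bexI[of _ "\<lambda>p q. Mv p q + Mw p q"]) (auto simp: mv_add_mat)
    qed
    moreover have "\<forall>c. \<forall>v\<in>U. (\<lambda>i. c * v i) \<in> U"
    proof (intro allI ballI)
      fix c and v :: "nat \<Rightarrow> 'a" assume "v \<in> U"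
      then obtain Mv where "Mv \<in> A" "\<forall>i<n. mat_vec d Mv (ev i) = (\<lambda>_. 0)" "v = mat_vec d Mv (ev n)"
        unfolding U_def by blast
      then show "(\<lambda>i. c * v i) \<in> U" unfolding U_def using cscale
        by (intro CollectI bexI[of _ "\<lambda>p q. c * Mv p q"]) (auto simp: mv_scale_mat)
    qed
    ultimately show ?thesis by (simp add: F_subspace_def)
  qed
  moreover have "U \<subseteq> vec_space d" by (auto simp: U_def mv_in)
  moreover have "\<forall>M\<in>A. \<forall>v\<in>U. mat_vec d M v \<in> U"
  proof (intro ballI)
    fix M and v :: "nat \<Rightarrow> 'a" assume M: "M \<in> A" and "v \<in> U"
    then obtain Mv where "Mv \<in> A" "\<forall>i<n. mat_vec d Mv (ev i) = (\<lambda>_. 0)" "v = mat_vec d Mv (ev n)"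
      unfolding U_def by blast
    then show "mat_vec d M v \<in> U" unfolding U_def using cmul M
      by (intro CollectI bexI[of _ "mmul d M Mv"]) (auto simp: mv_mmul mv_zero_vec)
  qed
  ultimately have "U = {\<lambda>_. 0} \<or> U = vec_space d" using irr by blast
  moreover have "mat_vec d M1 (ev n) \<in> U" using M1 unfolding U_def by blast
  ultimately have UV: "U = vec_space d" using M1(3) by auto
  show ?case
  proof (intro allI impI)
    fix w :: "nat \<Rightarrow> nat \<Rightarrow> 'a" assume w: "\<forall>i<Suc n. w i \<in> vec_space d"
    obtain M' where M': "M' \<in> A" "\<forall>i<n. mat_vec d M' (ev i) = w i" using IH[rule_format, of w] w by auto
    have "(\<lambda>p. w n p - mat_vec d M' (ev n) p) \<in> vec_space d"
      by (rule Fsub_diff[OF Fsub_vec]) (use w mv_in in auto)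
    then have "(\<lambda>p. w n p - mat_vec d M' (ev n) p) \<in> U" using UV by simp
    then obtain M'' where M'': "M'' \<in> A" "\<forall>i<n. mat_vec d M'' (ev i) = (\<lambda>_. 0)"
      "(\<lambda>p. w n p - mat_vec d M' (ev n) p) = mat_vec d M'' (ev n)" unfolding U_def by blast
    have "(\<lambda>p q. M' p q + M'' p q) \<in> A" using M' M'' cadd by blast
    moreover have "\<forall>i<Suc n. mat_vec d (\<lambda>p q. M' p q + M'' p q) (ev i) = w i"
    proof (intro allI impI)
      fix i assume "i < Suc n"
      then consider "i < n" | "i = n" by linarith
      then show "mat_vec d (\<lambda>p q. M' p q + M'' p q) (ev i) = w i"
      proof cases
        case 1 then show ?thesis using M' M'' by (simp add: mv_add_mat)
      next
        case 2 then show ?thesis using M''(3)[symmetric] by (simp add: mv_add_mat fun_eq_iff)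
      qed
    qed
    ultimately show "\<exists>M\<in>A. \<forall>i<Suc n. mat_vec d M (ev i) = w i" by blast
  qed
qed

lemma burnside:
  assumes "p < d" "q < d"
  shows "\<exists>M\<in>A. \<forall>p'<d. \<forall>q'<d. M p' q' = (if p' = p \<and> q' = q then 1 else 0)"
proof -
  define w where "w i = (if i = q then ev p else (\<lambda>_. 0::'a))" for i
  have z0: "(\<lambda>_. 0::'a) \<in> vec_space d" by (simp add: vec_space_def)
  have "\<forall>i<d. w i \<in> vec_space d" using ev_in[OF assms(1)] z0 by (auto simp: w_def)
  then obtain M where M: "M \<in> A" "\<forall>i<d. mat_vec d M (ev i) = w i" using density[of d] by blast
  have "M p' q' = (if p' = p \<and> q' = q then 1 else 0)" if "p' < d" "q' < d" for p' q'
  proof -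
    have "M p' q' = mat_vec d M (ev q') p'" using mv_ev[OF that(2), of M] that by simp
    also have "\<dots> = w q' p'" using M that by simp
    finally show ?thesis by (simp add: w_def ev_def)
  qed
  then show ?thesis using M by blast
qed

end




definition Fop :: "nat \<Rightarrow> (nat \<Rightarrow> nat) \<Rightarrow> nat \<Rightarrow> (nat \<Rightarrow> nat \<Rightarrow> 'a::field) \<Rightarrow> (nat list \<Rightarrow> 'a) \<Rightarrow> (nat list \<Rightarrow> 'a)" where
  "Fop r d i M c = (\<lambda>js. if js \<in> tidx r d then (\<Sum>l<d i. M (js ! i) l * c (js[i := l])) else 0)"

lemma tidx_upd: "js \<in> tidx r d \<Longrightarrow> i < r \<Longrightarrow> l < d i \<Longrightarrow> js[i := l] \<in> tidx r d"
  by (auto simp: tidx_def nth_list_update)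

lemma tidx_len: "js \<in> tidx r d \<Longrightarrow> length js = r" by (simp add: tidx_def)

lemma Fop_cong: "(\<forall>p<d i. \<forall>q<d i. M p q = M' p q) \<Longrightarrow> i < r \<Longrightarrow> Fop r d i M c = Fop r d i M' c"
  by (auto simp: Fop_def tidx_def fun_eq_iff intro!: sum.cong)

lemma Fop_add: "Fop r d i (\<lambda>p q. M p q + M' p q) c = (\<lambda>js. Fop r d i M c js + Fop r d i M' c js)"
  by (auto simp: Fop_def fun_eq_iff distrib_right sum.distrib)
lemma Fop_scale: "Fop r d i (\<lambda>p q. a * M p q) c = (\<lambda>js. a * Fop r d i M c js)"
  by (auto simp: Fop_def fun_eq_iff sum_distrib_left mult.assoc)
lemma Fop_zero: "Fop r d i (\<lambda>p q. 0) c = (\<lambda>_. 0)"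
  by (auto simp: Fop_def fun_eq_iff)

lemma Fop_mmul: assumes "i < r" shows "Fop r d i (mmul (d i) M M') c = Fop r d i M (Fop r d i M' c)"
proof
  fix js show "Fop r d i (mmul (d i) M M') c js = Fop r d i M (Fop r d i M' c) js"
  proof (cases "js \<in> tidx r d")
    case True
    have il: "i < length js" using True assms by (simp add: tidx_def)
    have "Fop r d i M (Fop r d i M' c) js = (\<Sum>l<d i. M (js ! i) l * (\<Sum>l'<d i. M' l l' * c (js[i := l'])))"
      unfolding Fop_def using True tidx_upd[OF True assms] il by (auto intro!: sum.cong)
    also have "\<dots> = (\<Sum>l'<d i. (\<Sum>l<d i. M (js ! i) l * M' l l') * c (js[i := l']))"
      by (simp add: sum_distrib_left sum_distrib_right mult.assoc) (rule sum.swap)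
    finally show ?thesis using True by (simp add: Fop_def mmul_def)
  qed (simp add: Fop_def)
qed

lemma Fop_id: assumes "i < r" "c \<in> tensor_space r d" shows "Fop r d i idm c = c"
proof
  fix js show "Fop r d i idm c js = c js"
  proof (cases "js \<in> tidx r d")
    case True
    have il: "js ! i < d i" using True assms by (simp add: tidx_def)
    have "(\<Sum>l<d i. idm (js ! i) l * c (js[i := l])) = (\<Sum>l<d i. if l = js ! i then c (js[i := l]) else 0)"
      by (rule sum.cong) (auto simp: idm_def)
    also have "\<dots> = c js" using il by (simp add: sum.delta')
    finally show ?thesis using True by (simp add: Fop_def)
  qed (use assms in \<open>simp add: Fop_def tensor_space_def\<close>)
qed

lemma Fop_E: assumes "i < r" "q < d i"
  shows "Fop r d i (\<lambda>p' q'. if p' = p \<and> q' = q then 1 else 0) c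
       = (\<lambda>js. if js \<in> tidx r d \<and> js ! i = p then c (js[i := q]) else 0)"
proof
  fix js
  show "Fop r d i (\<lambda>p' q'. if p' = p \<and> q' = q then 1 else 0) c js
       = (if js \<in> tidx r d \<and> js ! i = p then c (js[i := q]) else 0)"
  proof (cases "js \<in> tidx r d")
    case True
    have "Fop r d i (\<lambda>p' q'. if p' = p \<and> q' = q then 1 else 0) c js
        = (\<Sum>l<d i. (if js ! i = p \<and> l = q then 1 else 0) * c (js[i := l]))"
      by (simp only: Fop_def True if_True)
    also have "\<dots> = (\<Sum>l<d i. if l = q then (if js ! i = p then c (js[i := l]) else 0) else 0)"
      by (rule sum.cong) auto
    also have "\<dots> = (if js ! i = p then c (js[i := q]) else 0)" using assms by (simp add: sum.delta')
    finally show ?thesis using True by simp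
  qed (simp add: Fop_def)
qed

lemma tidx_finite: "finite (tidx r d)"
proof -
  have "tidx r d \<subseteq> {xs. set xs \<subseteq> (\<Union>i<r. {..<d i}) \<and> length xs = r}"
    by (fastforce simp: tidx_def in_set_conv_nth)
  moreover have "finite {xs. set xs \<subseteq> (\<Union>i<r. {..<d i}) \<and> length xs = r}"
    by (rule finite_lists_length_eq) auto
  ultimately show ?thesis using finite_subset by blast
qed

lemma ta_eq: "tensor_act N r d \<rho> b x k c = (\<lambda>js. \<Sum>i<r. eval_mono N (b i) k * Fop r d i (\<rho> i x) c js)"
  by (auto simp: tensor_act_def Fop_def fun_eq_iff)


lemma deltas_in:
  fixes W :: "(nat list \<Rightarrow> 'a::field) set"
  assumes W: "F_subspace W" "W \<subseteq> tensor_space r d"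
    and E: "\<forall>i<r. \<forall>p<d i. \<forall>q<d i. \<forall>c\<in>W. Fop r d i (\<lambda>p' q'. if p' = p \<and> q' = q then 1 else 0) c \<in> W"
    and c: "c \<in> W" "c \<noteq> (\<lambda>_. 0)"
  shows "W = tensor_space r d"
proof
  show "W \<subseteq> tensor_space r d" by fact
  have delta: "(\<lambda>js. if js = js1 then 1 else 0) \<in> W" if js1: "js1 \<in> tidx r d" for js1
  proof -
    have "n \<le> r \<Longrightarrow> \<exists>c\<in>W. (\<forall>js. c js \<noteq> 0 \<longrightarrow> js \<in> tidx r d \<and> (\<forall>i<n. js ! i = js1 ! i)) \<and> (\<exists>js. c js \<noteq> 0)" for n
    proof (induction n)
      case 0
      have "\<forall>js. c js \<noteq> 0 \<longrightarrow> js \<in> tidx r d" using c W by (auto simp: tensor_space_def)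
      moreover have "\<exists>js. c js \<noteq> 0" using c by auto
      ultimately show ?case using c by blast
    next
      case (Suc n)
      then have nr: "n < r" by simp
      obtain c0 js0 where c0: "c0 \<in> W" "\<forall>js. c0 js \<noteq> 0 \<longrightarrow> js \<in> tidx r d \<and> (\<forall>i<n. js ! i = js1 ! i)"
        "c0 js0 \<noteq> 0" using Suc by auto
      have js0: "js0 \<in> tidx r d" using c0 by blast
      define p where "p = js1 ! n"
      define q where "q = js0 ! n"
      have pd: "p < d n" using js1 nr by (simp add: p_def tidx_def)
      have qd: "q < d n" using js0 nr by (simp add: q_def tidx_def)
      define c' where "c' = Fop r d n (\<lambda>p' q'. if p' = p \<and> q' = q then 1 else 0) c0"
      have c'W: "c' \<in> W" unfolding c'_def using E nr pd qd c0(1) by blast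
      have c'eq: "c' = (\<lambda>js. if js \<in> tidx r d \<and> js ! n = p then c0 (js[n := q]) else 0)"
        unfolding c'_def by (rule Fop_E[of n r q d, OF nr qd])
      have supp: "\<forall>js. c' js \<noteq> 0 \<longrightarrow> js \<in> tidx r d \<and> (\<forall>i<Suc n. js ! i = js1 ! i)"
      proof (intro allI impI)
        fix js assume "c' js \<noteq> 0"
        then have js: "js \<in> tidx r d" "js ! n = p" "c0 (js[n := q]) \<noteq> 0"
          unfolding c'eq by (meson)+
        then have "\<forall>i<n. js[n := q] ! i = js1 ! i" using c0(2) by blast
        then have "\<forall>i<n. js ! i = js1 ! i" by (auto simp: nth_list_update)
        then show "js \<in> tidx r d \<and> (\<forall>i<Suc n. js ! i = js1 ! i)"
          using js(1,2) unfolding p_def less_Suc_eq by blast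
      qed
      have nz: "c' (js0[n := p]) \<noteq> 0"
      proof -
        have ln: "n < length js0" using js0 nr by (simp add: tidx_def)
        have "js0[n := p] \<in> tidx r d" by (rule tidx_upd[OF js0 nr pd])
        moreover have "js0[n := p] ! n = p" using ln by simp
        moreover have "(js0[n := p])[n := q] = js0" using ln by (simp add: q_def)
        ultimately show ?thesis using c0(3) by (simp add: c'eq)
      qed
      have "(\<forall>js. c' js \<noteq> 0 \<longrightarrow> js \<in> tidx r d \<and> (\<forall>i<Suc n. js ! i = js1 ! i)) \<and> (\<exists>js. c' js \<noteq> 0)"
        using supp nz by blast
      then show ?case using c'W by (rule bexI)
    qed
    then obtain c1 js2 where c1: "c1 \<in> W" "\<forall>js. c1 js \<noteq> 0 \<longrightarrow> js \<in> tidx r d \<and> (\<forall>i<r. js ! i = js1 ! i)"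
      "c1 js2 \<noteq> 0" by blast
    have eqj: "js = js1" if "c1 js \<noteq> 0" for js
    proof -
      have "js \<in> tidx r d" "\<forall>i<r. js ! i = js1 ! i" using c1(2) that by auto
      moreover have "length js = r" "length js1 = r" using js1 \<open>js \<in> tidx r d\<close> by (auto simp: tidx_def)
      ultimately show ?thesis by (metis nth_equalityI)
    qed
    then have j2: "js2 = js1" using c1(3) by blast
    have "(\<lambda>js. inverse (c1 js1) * c1 js) \<in> W" using Fsub_scale[OF W(1) c1(1)] .
    moreover have "(\<lambda>js. inverse (c1 js1) * c1 js) = (\<lambda>js. if js = js1 then 1 else 0)"
    proof
      fix js show "inverse (c1 js1) * c1 js = (if js = js1 then 1 else 0)"
      proof (cases "js = js1")
        case True then show ?thesis using c1(3) j2 by simp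
      next
        case False then have "c1 js = 0" using eqj by blast
        then show ?thesis using False by simp
      qed
    qed
    ultimately show ?thesis by simp
  qed
  show "tensor_space r d \<subseteq> W"
  proof
    fix e :: "nat list \<Rightarrow> 'a" assume e: "e \<in> tensor_space r d"
    have "(\<lambda>js. \<Sum>js'\<in>tidx r d. (\<lambda>js'' . e js' * (if js'' = js' then 1 else 0)) js) \<in> W"
      by (rule Fsub_sum[OF W(1)]) (use delta Fsub_scale[OF W(1)] in blast)
    moreover have "(\<lambda>js. \<Sum>js'\<in>tidx r d. (\<lambda>js'' . e js' * (if js'' = js' then 1 else 0)) js) = e"
    proof
      fix js show "(\<Sum>js'\<in>tidx r d. (\<lambda>js'' . e js' * (if js'' = js' then 1 else 0)) js) = e js"
        using e tidx_finite[of r d] by (cases "js \<in> tidx r d") (auto simp: tensor_space_def if_distrib[of "\<lambda>x. _ * x"] sum.delta cong: if_cong)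
    qed
    ultimately show "e \<in> W" by simp
  qed
qed




theorem theorem4p4:
  fixes scl :: "'a::field_char_0 \<Rightarrow> 'g::ab_group_add \<Rightarrow> 'g"
    and br :: "'g \<Rightarrow> 'g \<Rightarrow> 'g"
    and N :: nat and \<sigma> :: "nat \<Rightarrow> 'g \<Rightarrow> 'g" and m :: "nat \<Rightarrow> nat" and \<xi> :: "nat \<Rightarrow> 'a"
    and r :: nat and d :: "nat \<Rightarrow> nat" and \<rho> :: "nat \<Rightarrow> 'g \<Rightarrow> nat \<Rightarrow> nat \<Rightarrow> 'a"
    and b :: "nat \<Rightarrow> nat \<Rightarrow> 'a"
  assumes "alg_closed TYPE('a)"
    and "simple_lie_algebra scl br"
    and "\<forall>i<N. lie_automorphism scl br (\<sigma> i) \<and> has_order (\<sigma> i) (m i)"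
    and "\<forall>i<N. \<forall>j<N. \<sigma> i \<circ> \<sigma> j = \<sigma> j \<circ> \<sigma> i"
    and "\<forall>i<N. primitive_root (\<xi> i) (m i)"
    and "\<forall>i<r. irreducible_rep scl br (d i) (\<rho> i)"
    and "\<forall>i<r. \<forall>j<N. b i j \<noteq> 0"
    and "\<forall>i<r. \<forall>i'<r. i \<noteq> i' \<longrightarrow> (\<exists>j<N. b i j ^ m j \<noteq> b i' j ^ m j)"
  shows "simple_multiloop_tensor_module scl N \<sigma> \<xi> r d \<rho> b"
proof -
  note alg = assms(1)
  have vs: "vector_space scl" using assms(2) by (simp add: simple_lie_algebra_def lie_algebra_def)
  interpret V: vector_space scl by (rule vs)
  have irr: "\<forall>i<r. irreducible_rep scl br (d i) (\<rho> i)" by (rule assms(6))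
  have d1: "\<forall>i<r. d i \<ge> 1" using irr by (simp add: irreducible_rep_def)
  have rho_lin: "\<And>i a x y p q. i < r \<Longrightarrow> p < d i \<Longrightarrow> q < d i \<Longrightarrow> \<rho> i (scl a x + y) p q = a * \<rho> i x p q + \<rho> i y p q"
    using irr by (simp add: irreducible_rep_def lie_rep_def)
  have xi0: "\<forall>i<N. \<xi> i \<noteq> 0 \<and> \<xi> i ^ m i = 1 \<and> m i \<ge> 1" using assms(5)
    by (auto simp: primitive_root_def power_0_left)
  have nonzero: "(tensor_space r d :: (nat list \<Rightarrow> 'a) set) \<noteq> {\<lambda>_. 0}"
  proof
    assume T0: "(tensor_space r d :: (nat list \<Rightarrow> 'a) set) = {\<lambda>_. 0}"
    define js0 where "js0 = replicate r (0::nat)"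
    have "js0 \<in> tidx r d" using d1 by (auto simp: js0_def tidx_def)
    then have "(\<lambda>js. if js = js0 then (1::'a) else 0) \<in> tensor_space r d" by (auto simp: tensor_space_def)
    then have "(\<lambda>js. if js = js0 then (1::'a) else 0) = (\<lambda>_. 0)" using T0 by blast
    then show False by (metis one_neq_zero)
  qed
  show ?thesis unfolding simple_multiloop_tensor_module_def
  proof (intro conjI allI impI)
    show "(tensor_space r d :: (nat list \<Rightarrow> 'a) set) \<noteq> {\<lambda>_. 0}" by (rule nonzero)
    fix W :: "(nat list \<Rightarrow> 'a) set"
    assume H: "F_subspace W \<and> W \<subseteq> tensor_space r d \<and>
          (\<forall>k. \<forall>x\<in>grade_space scl N \<sigma> \<xi> k. \<forall>c\<in>W. tensor_act N r d \<rho> b x k c \<in> W)"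
    then have W: "F_subspace W" "W \<subseteq> tensor_space r d"
      and stab: "\<forall>k. \<forall>x\<in>grade_space scl N \<sigma> \<xi> k. \<forall>c\<in>W. tensor_act N r d \<rho> b x k c \<in> W" by auto
    have stepA: "\<forall>c\<in>W. Fop r d i (\<rho> i x) c \<in> W" if i: "i < r" and x: "x \<in> grade_space scl N \<sigma> \<xi> k" for i k x
    proof -
      have sepres: "\<forall>i\<in>{..<r}. \<forall>c\<in>W. (\<lambda>js. eval_mono N (b i) k * Fop r d i (\<rho> i x) c js) \<in> W"
      proof (rule sep[where S="{..<r}" and W=W and N=N and z="\<lambda>i j. b i j ^ m j" and A="\<lambda>i c js. eval_mono N (b i) k * Fop r d i (\<rho> i x) c js"])
        show "finite {..<r}" by simp
        show "F_subspace W" by (rule W(1))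
        show "\<forall>i\<in>{..<r}. \<forall>j<N. b i j ^ m j \<noteq> 0" using assms(7) by simp
        show "\<forall>i\<in>{..<r}. \<forall>i'\<in>{..<r}. i \<noteq> i' \<longrightarrow> (\<exists>j<N. b i j ^ m j \<noteq> b i' j ^ m j)" using assms(8) by simp
        show "\<forall>l. \<forall>c\<in>W. (\<lambda>js. \<Sum>i\<in>{..<r}. (\<Prod>j<N. (b i j ^ m j) powi l j) * (eval_mono N (b i) k * Fop r d i (\<rho> i x) c js)) \<in> W"
        proof (intro allI ballI)
          fix l :: "nat \<Rightarrow> int" and c assume c: "c \<in> W"
          define k' where "k' j = k j + int (m j) * l j" for j
          have gs: "grade_space scl N \<sigma> \<xi> k' = grade_space scl N \<sigma> \<xi> k"
          proof -
            have "\<xi> i powi k' i = \<xi> i powi k i" if "i < N" for i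
            proof -
              have "\<xi> i powi k' i = \<xi> i powi k i * \<xi> i powi (int (m i) * l i)"
                unfolding k'_def using xi0 that by (simp add: power_int_add)
              also have "\<xi> i powi (int (m i) * l i) = 1"
                unfolding power_int_mult using xi0 that by simp
              finally show ?thesis by simp
            qed
            then show ?thesis by (simp add: grade_space_def)
          qed
          have "tensor_act N r d \<rho> b x k' c \<in> W" using stab x c gs by blast
          moreover have "tensor_act N r d \<rho> b x k' c
             = (\<lambda>js. \<Sum>i\<in>{..<r}. (\<Prod>j<N. (b i j ^ m j) powi l j) * (eval_mono N (b i) k * Fop r d i (\<rho> i x) c js))"
            unfolding ta_eq
          proof (intro ext sum.cong refl)
            fix js i assume "i \<in> {..<r}"
            then have ir: "i < r" by simp
            have "eval_mono N (b i) k' = (\<Prod>j<N. (b i j ^ m j) powi l j) * eval_mono N (b i) k"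
              unfolding eval_mono_def prod.distrib[symmetric]
            proof (rule prod.cong[OF refl])
              fix j assume "j \<in> {..<N}"
              then have b0: "b i j \<noteq> 0" using assms(7) ir by simp
              have "b i j powi k' j = b i j powi k j * b i j powi (int (m j) * l j)"
                unfolding k'_def using b0 by (simp add: power_int_add)
              also have "b i j powi (int (m j) * l j) = (b i j ^ m j) powi l j"
                unfolding power_int_mult by simp
              finally show "b i j powi k' j = (b i j ^ m j) powi l j * b i j powi k j" by simp
            qed
            then show "eval_mono N (b i) k' * Fop r d i (\<rho> i x) c js
              = (\<Prod>j<N. (b i j ^ m j) powi l j) * (eval_mono N (b i) k * Fop r d i (\<rho> i x) c js)" by simp
          qed
          ultimately show "(\<lambda>js. \<Sum>i\<in>{..<r}. (\<Prod>j<N. (b i j ^ m j) powi l j) * (eval_mono N (b i) k * Fop r d i (\<rho> i x) c js)) \<in> W"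
            by simp
        qed
      qed
      have e0: "eval_mono N (b i) k \<noteq> 0" using assms(7) i by (simp add: eval_mono_def)
      show ?thesis
      proof
        fix c assume c: "c \<in> W"
        have "(\<lambda>js. inverse (eval_mono N (b i) k) * (\<lambda>js. eval_mono N (b i) k * Fop r d i (\<rho> i x) c js) js) \<in> W"
          by (rule Fsub_scale[OF W(1)]) (use sepres i c in blast)
        moreover have "(\<lambda>js. inverse (eval_mono N (b i) k) * (\<lambda>js. eval_mono N (b i) k * Fop r d i (\<rho> i x) c js) js)
           = Fop r d i (\<rho> i x) c" using e0 by (simp add: fun_eq_iff)
        ultimately show "Fop r d i (\<rho> i x) c \<in> W" by simp
      qed
    qed
    have stepB: "\<forall>c\<in>W. Fop r d i (\<rho> i x) c \<in> W" if i: "i < r" for i x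
    proof -
      define S where "S = {x. \<forall>c\<in>W. Fop r d i (\<rho> i x) c \<in> W}"
      have rho0: "\<rho> i 0 p q = 0" if "p < d i" "q < d i" for p q
      proof -
        have "\<rho> i (scl 1 0 + 0) p q = 1 * \<rho> i 0 p q + \<rho> i 0 p q" using rho_lin i that by blast
        then show ?thesis by simp
      qed
      have sub: "V.subspace S"
      proof (rule V.subspaceI)
        have "Fop r d i (\<rho> i 0) c = Fop r d i (\<lambda>p q. 0) c" for c
          by (rule Fop_cong) (use rho0 i in auto)
        moreover have "Fop r d i (\<lambda>p q. 0) c = (\<lambda>_. 0)" for c :: "nat list \<Rightarrow> 'a" by (rule Fop_zero)
        ultimately show "0 \<in> S" unfolding S_def using Fsub_zero[OF W(1)] by simp
      next
        fix x y assume "x \<in> S" "y \<in> S"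
        moreover have "Fop r d i (\<rho> i (x + y)) c = Fop r d i (\<lambda>p q. \<rho> i x p q + \<rho> i y p q) c" for c
        proof (rule Fop_cong[OF _ i], intro allI impI)
          fix p q assume "p < d i" "q < d i"
          then show "\<rho> i (x + y) p q = \<rho> i x p q + \<rho> i y p q" using rho_lin[OF i, of p q 1 x y] by simp
        qed
        ultimately show "x + y \<in> S" unfolding S_def
        proof (intro CollectI ballI)
          fix c assume xS: "x \<in> {x. \<forall>c\<in>W. Fop r d i (\<rho> i x) c \<in> W}" and yS: "y \<in> {x. \<forall>c\<in>W. Fop r d i (\<rho> i x) c \<in> W}"
            and eq: "\<And>c. Fop r d i (\<rho> i (x + y)) c = Fop r d i (\<lambda>p q. \<rho> i x p q + \<rho> i y p q) c" and c: "c \<in> W"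
          have "(\<lambda>js. Fop r d i (\<rho> i x) c js + Fop r d i (\<rho> i y) c js) \<in> W"
            using Fsub_add[OF W(1)] xS yS c by blast
          then show "Fop r d i (\<rho> i (x + y)) c \<in> W" unfolding eq Fop_add .
        qed
      next
        fix a x assume "x \<in> S"
        moreover have "Fop r d i (\<rho> i (scl a x)) c = Fop r d i (\<lambda>p q. a * \<rho> i x p q) c" for c
        proof (rule Fop_cong[OF _ i], intro allI impI)
          fix p q assume pq: "p < d i" "q < d i"
          then show "\<rho> i (scl a x) p q = a * \<rho> i x p q" using rho_lin[OF i pq, of a x 0] rho0[OF pq] by simp
        qed
        ultimately show "scl a x \<in> S" unfolding S_def
        proof (intro CollectI ballI)
          fix c assume xS: "x \<in> {x. \<forall>c\<in>W. Fop r d i (\<rho> i x) c \<in> W}"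
            and eq: "\<And>c. Fop r d i (\<rho> i (scl a x)) c = Fop r d i (\<lambda>p q. a * \<rho> i x p q) c" and c: "c \<in> W"
          have "(\<lambda>js. a * Fop r d i (\<rho> i x) c js) \<in> W"
            using Fsub_scale[OF W(1)] xS c by blast
          then show "Fop r d i (\<rho> i (scl a x)) c \<in> W" unfolding eq Fop_scale .
        qed
      qed
      have incl: "(\<Union>k. {x. \<forall>i<N. \<sigma> i x = scl (\<xi> i powi k i) x}) \<subseteq> S"
      proof
        fix x assume "x \<in> (\<Union>k. {x. \<forall>i<N. \<sigma> i x = scl (\<xi> i powi k i) x})"
        then obtain k where "x \<in> grade_space scl N \<sigma> \<xi> k" by (auto simp: grade_space_def)
        then show "x \<in> S" unfolding S_def using stepA[OF i] by blast
      qed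
      have spanU: "V.span (\<Union>k. {x. \<forall>i<N. \<sigma> i x = scl (\<xi> i powi k i) x}) = UNIV"
      proof (rule grade_span[OF vs])
        have lin: "\<forall>i<N. Vector_Spaces.linear scl scl (\<sigma> i)" using assms(3) by (simp add: lie_automorphism_def)
        show "\<forall>i<N. \<forall>x y. \<sigma> i (x + y) = \<sigma> i x + \<sigma> i y" using lin by (simp add: Vector_Spaces.linear_iff)
        show "\<forall>i<N. \<forall>c x. \<sigma> i (scl c x) = scl c (\<sigma> i x)" using lin by (simp add: Vector_Spaces.linear_iff)
        show "\<forall>i<N. (\<sigma> i ^^ m i) = id" using assms(3) by (simp add: has_order_def)
        show "\<forall>i<N. primitive_root (\<xi> i) (m i)" by (rule assms(5))
        show "\<forall>i<N. \<forall>j<N. \<sigma> i \<circ> \<sigma> j = \<sigma> j \<circ> \<sigma> i" by (rule assms(4))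
        show "\<forall>i<N. of_nat (m i) \<noteq> (0::'a)" using xi0 by (simp add: Suc_le_eq)
      qed
      have "UNIV \<subseteq> S" using V.span_minimal[OF incl sub] spanU by simp
      then show ?thesis unfolding S_def by blast
    qed
    have stepD: "\<forall>i<r. \<forall>p<d i. \<forall>q<d i. \<forall>c\<in>W. Fop r d i (\<lambda>p' q'. if p' = p \<and> q' = q then 1 else 0) c \<in> W"
    proof (intro allI impI ballI)
      fix i p q c assume i: "i < r" and p: "p < d i" and q: "q < d i" and c: "c \<in> W"
      define Ai where "Ai = {M. \<forall>c\<in>W. Fop r d i M c \<in> W}"
      have "\<exists>M\<in>Ai. \<forall>p'<d i. \<forall>q'<d i. M p' q' = (if p' = p \<and> q' = q then 1 else 0)"
      proof (rule burnside[OF alg])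
        show "d i \<ge> 1" using d1 i by simp
        show "\<forall>M\<in>Ai. \<forall>M'\<in>Ai. (\<lambda>p q. M p q + M' p q) \<in> Ai"
          unfolding Ai_def
        proof (intro ballI CollectI)
          fix M M' c assume "M \<in> {M. \<forall>c\<in>W. Fop r d i M c \<in> W}" "M' \<in> {M. \<forall>c\<in>W. Fop r d i M c \<in> W}" "c \<in> W"
          then have "(\<lambda>js. Fop r d i M c js + Fop r d i M' c js) \<in> W" using Fsub_add[OF W(1)] by blast
          then show "Fop r d i (\<lambda>p q. M p q + M' p q) c \<in> W" unfolding Fop_add .
        qed
        show "\<forall>M\<in>Ai. \<forall>c. (\<lambda>p q. c * M p q) \<in> Ai"
          unfolding Ai_def
        proof (intro ballI allI CollectI)
          fix M a c assume "M \<in> {M. \<forall>c\<in>W. Fop r d i M c \<in> W}" "c \<in> W"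
          then have "(\<lambda>js. a * Fop r d i M c js) \<in> W" using Fsub_scale[OF W(1)] by blast
          then show "Fop r d i (\<lambda>p q. a * M p q) c \<in> W" unfolding Fop_scale .
        qed
        show "\<forall>M\<in>Ai. \<forall>M'\<in>Ai. mmul (d i) M M' \<in> Ai"
          unfolding Ai_def
        proof (intro ballI CollectI)
          fix M M' c assume "M \<in> {M. \<forall>c\<in>W. Fop r d i M c \<in> W}" "M' \<in> {M. \<forall>c\<in>W. Fop r d i M c \<in> W}" "c \<in> W"
          then have "Fop r d i M (Fop r d i M' c) \<in> W" by blast
          then show "Fop r d i (mmul (d i) M M') c \<in> W" unfolding Fop_mmul[OF i] .
        qed
        show "idm \<in> Ai"
          unfolding Ai_def
        proof (intro ballI CollectI)
          fix c assume c: "c \<in> W"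
          then have "Fop r d i idm c = c" using Fop_id[OF i] W(2) by blast
          then show "Fop r d i idm c \<in> W" using c by simp
        qed
        show "\<forall>U. F_subspace U \<and> U \<subseteq> vec_space (d i) \<and> (\<forall>M\<in>Ai. \<forall>v\<in>U. mat_vec (d i) M v \<in> U)
               \<longrightarrow> U = {\<lambda>_. 0} \<or> U = vec_space (d i)"
        proof (intro allI impI)
          fix U :: "(nat \<Rightarrow> 'a) set"
          assume U: "F_subspace U \<and> U \<subseteq> vec_space (d i) \<and> (\<forall>M\<in>Ai. \<forall>v\<in>U. mat_vec (d i) M v \<in> U)"
          have "\<rho> i x \<in> Ai" for x unfolding Ai_def using stepB[OF i] by simp
          then have "\<forall>x. \<forall>v\<in>U. mat_vec (d i) (\<rho> i x) v \<in> U" using U by blast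
          then show "U = {\<lambda>_. 0} \<or> U = vec_space (d i)"
            using irr i U unfolding irreducible_rep_def by blast
        qed
        show "p < d i" "q < d i" by fact+
      qed
      then obtain M where M: "M \<in> Ai" "\<forall>p'<d i. \<forall>q'<d i. M p' q' = (if p' = p \<and> q' = q then 1 else 0)" by blast
      have "Fop r d i (\<lambda>p' q'. if p' = p \<and> q' = q then 1 else 0) c = Fop r d i M c"
        by (rule Fop_cong[OF _ i]) (use M(2) in auto)
      then show "Fop r d i (\<lambda>p' q'. if p' = p \<and> q' = q then 1 else 0) c \<in> W" using M(1) c by (simp add: Ai_def)
    qed
    show "W = {\<lambda>_. 0} \<or> W = tensor_space r d"
    proof (cases "W = {\<lambda>_. 0}")
      case False
      have "(\<lambda>_. 0) \<in> W" by (rule Fsub_zero[OF W(1)])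
      then obtain c where "c \<in> W" "c \<noteq> (\<lambda>_. 0)" using False by blast
      then show ?thesis using deltas_in[OF W stepD] by blast
    qed simp
  qed
qed


end
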